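(* Let $\gamma>0$, $W,V\in C_{p,\gamma}^{0}(\mathbb{R})$ (possibly complex-valued), $\mathscr{L}\psi:=-\psi''+W\psi'+V\psi$, and for $\lambda\in\mathbb{R}$ let $\mathcal{E}(\lambda):=\{\psi\in C_{p}^{2}(\mathbb{R}) : \mathscr{L}\psi=\lambda\psi\}$. Then: - if $\lambda\in\sigma_{g}^{1}(\mathscr{L})$, then $\mathcal{E}(\lambda)=\{e^{\mathrm{i}k_{0}x}p(x) : \mathcal{D}^{k_{0}}p=\lambda p,\ p\in C_{p,\gamma}^{2}(\mathbb{R})\}$, where $\mathcal{A}(\lambda)=\{[k_{0}]_{\gamma}\}$; - if $\lambda\in\sigma_{g}^{2}(\mathscr{L})$, then $\mathcal{E}(\lambda)=\{e^{\mathrm{i}k_{0}x}(p_{1}(x)+xp_{2}(x)) : \mathcal{D}^{k_{0}}p_{2}=\lambda p_{2},\ \mathcal{D}^{k_{0}}p_{1}=\lambda p_{1}+(2\mathrm{i}k_{0}-W)p_{2}+2p_{2}',\ p_{1},p_{2}\in C_{p,\gamma}^{2}(\mathbb{R})\}$; - if $\lambda\in\sigma_{g}^{3}(\mathscr{L})$, then $\mathcal{E}(\lambda)=\operatorname{span}\{e^{\mathrm{i}kx}p(x) : \mathcal{D}^{k}p=\lambda p,\ [k]_{\gamma}\in\mathcal{A}(\lambda),\ |\mathcal{A}(\lambda)|=2,\ p\in C_{p,\gamma}^{2}(\mathbb{R})\}$.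
   Context: $C_{p}^{0}(I)$: integrable piecewise-continuous functions on $I$ (finitely many discontinuities on each finite subinterval, one-sided improper integrals of $|f|$ converging at each discontinuity); $C_{p}^{l}(I)$: differentiable functions with derivative in $C_{p}^{l-1}(I)$; $C_{p,\gamma}^{l}(\mathbb{R})$: $\gamma$-periodic functions in $C_{p}^{l}(\mathbb{R})$; $[k]_{\gamma}=\{k+2m\pi/\gamma:m\in\mathbb{Z}\}$ for $k\in\mathbb{C}$. Every solution in $C_p^2(\mathbb{R})$ of $\mathscr{L}\psi=\lambda\psi$ has one of the forms (a) $e^{\mathrm{i}k_0x}p(x)$, (b) $e^{\mathrm{i}k_0x}(p_1(x)+xp_2(x))$ with $p_2\not\equiv0$, (c) $e^{\mathrm{i}k_1x}p_1(x)+e^{\mathrm{i}k_2x}p_2(x)$ with $[k_1]_\gamma\ne[k_2]_\gamma$, where $k_0,k_1,k_2\in\mathbb{C}$ and $p,p_1,p_2\in C^2_{p,\gamma}(\mathbb{R})$; the exponents $k$ are called quasimomenta, and $\mathcal{A}(\lambda)$ is the set of congruence classes modulo $2\pi/\gamma$ of quasimomenta of solutions corresponding to $\lambda$ (it has at most two elements; in cases (a),(b) $\mathcal{A}(\lambda)=\{[k_0]_\gamma\}$, in case (c) $\mathcal{A}(\lambda)=\{[k_1]_\gamma,[k_2]_\gamma\}$). $\sigma_{g}^{1}(\mathscr{L})$, $\sigma_{g}^{2}(\mathscr{L})$, $\sigma_{g}^{3}(\mathscr{L})$ are the sets of $\lambda\in\mathbb{R}$ for which $\mathscr{L}\psi=\lambda\psi$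 has a solution $\psi$ of form (a) with $|\mathcal{A}(\lambda)|=1$, of form (b) with $|\mathcal{A}(\lambda)|=1$, and of form (c) with $|\mathcal{A}(\lambda)|=2$, respectively. For $k\in\mathbb{C}$, $\mathcal{D}^{k}:=-\frac{d^{2}}{dx^{2}}+(W-2\mathrm{i}k)\frac{d}{dx}+\mathrm{i}kW+V+k^{2}$. *)

theory Defs
  imports "HOL-Analysis.Analysis" "HOL-Library.Function_Algebras"
begin

definition D1 :: "(real \<Rightarrow> complex) \<Rightarrow> real \<Rightarrow> complex" where
  "D1 f = (\<lambda>x. vector_derivative f (at x))"

(* C_p^0(R): piecewise continuous (discontinuity set finite on every bounded interval),
   with |f| (improperly) integrable on every compact interval *)
definition PC :: "(real \<Rightarrow> complex) \<Rightarrow> bool" where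
  "PC f \<longleftrightarrow> (\<exists>D. (\<forall>a b. finite (D \<inter> {a..b})) \<and> (\<forall>x. x \<notin> D \<longrightarrow> isCont f x)
                \<and> (\<forall>a b. f absolutely_integrable_on {a..b}))"

fun Cp :: "nat \<Rightarrow> (real \<Rightarrow> complex) \<Rightarrow> bool" where
  "Cp 0 f = PC f"
| "Cp (Suc l) f = ((\<forall>x. f differentiable (at x)) \<and> Cp l (D1 f))"

definition Cpg :: "nat \<Rightarrow> real \<Rightarrow> (real \<Rightarrow> complex) \<Rightarrow> bool" where
  "Cpg l \<gamma> f \<longleftrightarrow> Cp l f \<and> (\<forall>x. f (x + \<gamma>) = f x)"

definition cls :: "real \<Rightarrow> complex \<Rightarrow> complex set" where
  "cls \<gamma> k = range (\<lambda>m::int. k + complex_of_real (2 * real_of_int m * pi / \<gamma>))"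

definition Lop :: "(real \<Rightarrow> complex) \<Rightarrow> (real \<Rightarrow> complex) \<Rightarrow> (real \<Rightarrow> complex) \<Rightarrow> real \<Rightarrow> complex" where
  "Lop W V \<psi> = (\<lambda>x. - D1 (D1 \<psi>) x + W x * D1 \<psi> x + V x * \<psi> x)"

definition Dk :: "(real \<Rightarrow> complex) \<Rightarrow> (real \<Rightarrow> complex) \<Rightarrow> complex \<Rightarrow> (real \<Rightarrow> complex) \<Rightarrow> real \<Rightarrow> complex" where
  "Dk W V k p = (\<lambda>x. - D1 (D1 p) x + (W x - 2 * \<i> * k) * D1 p x
                     + (\<i> * k * W x + V x + k ^ 2) * p x)"

definition Eig :: "(real \<Rightarrow> complex) \<Rightarrow> (real \<Rightarrow> complex) \<Rightarrow> real \<Rightarrow> (real \<Rightarrow> complex) set" where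
  "Eig W V lam = {\<psi>. Cp 2 \<psi> \<and> Lop W V \<psi> = (\<lambda>x. complex_of_real lam * \<psi> x)}"

definition formA :: "real \<Rightarrow> complex \<Rightarrow> (real \<Rightarrow> complex) \<Rightarrow> bool" where
  "formA \<gamma> k \<psi> \<longleftrightarrow> (\<exists>p. Cpg 2 \<gamma> p \<and> \<psi> = (\<lambda>x. exp (\<i> * k * complex_of_real x) * p x))"

definition formB :: "real \<Rightarrow> complex \<Rightarrow> (real \<Rightarrow> complex) \<Rightarrow> bool" where
  "formB \<gamma> k \<psi> \<longleftrightarrow> (\<exists>p1 p2. Cpg 2 \<gamma> p1 \<and> Cpg 2 \<gamma> p2 \<and> p2 \<noteq> (\<lambda>x. 0) \<and>
      \<psi> = (\<lambda>x. exp (\<i> * k * complex_of_real x) * (p1 x + complex_of_real x * p2 x)))"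

definition formC :: "real \<Rightarrow> complex \<Rightarrow> complex \<Rightarrow> (real \<Rightarrow> complex) \<Rightarrow> bool" where
  "formC \<gamma> k1 k2 \<psi> \<longleftrightarrow> (\<exists>p1 p2. Cpg 2 \<gamma> p1 \<and> Cpg 2 \<gamma> p2 \<and> p1 \<noteq> (\<lambda>x. 0) \<and> p2 \<noteq> (\<lambda>x. 0) \<and>
      cls \<gamma> k1 \<noteq> cls \<gamma> k2 \<and>
      \<psi> = (\<lambda>x. exp (\<i> * k1 * complex_of_real x) * p1 x + exp (\<i> * k2 * complex_of_real x) * p2 x))"

definition QM :: "real \<Rightarrow> (real \<Rightarrow> complex) \<Rightarrow> complex set" where
  "QM \<gamma> \<psi> = {k. (\<psi> \<noteq> (\<lambda>x. 0) \<and> formA \<gamma> k \<psi>) \<or> formB \<gamma> k \<psi>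
                 \<or> (\<exists>k'. formC \<gamma> k k' \<psi> \<or> formC \<gamma> k' k \<psi>)}"

definition Aset :: "real \<Rightarrow> (real \<Rightarrow> complex) \<Rightarrow> (real \<Rightarrow> complex) \<Rightarrow> real \<Rightarrow> complex set set" where
  "Aset \<gamma> W V lam = cls \<gamma> ` (\<Union>\<psi>\<in>Eig W V lam. QM \<gamma> \<psi>)"

definition sigma1 :: "real \<Rightarrow> (real \<Rightarrow> complex) \<Rightarrow> (real \<Rightarrow> complex) \<Rightarrow> real set" where
  "sigma1 \<gamma> W V = {lam. (\<exists>\<psi>\<in>Eig W V lam. \<psi> \<noteq> (\<lambda>x. 0) \<and> (\<exists>k. formA \<gamma> k \<psi>))
        \<and> \<not> (\<exists>\<psi>\<in>Eig W V lam. \<exists>k. formB \<gamma> k \<psi>) \<and> card (Aset \<gamma> W V lam) = 1}"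

definition sigma2 :: "real \<Rightarrow> (real \<Rightarrow> complex) \<Rightarrow> (real \<Rightarrow> complex) \<Rightarrow> real set" where
  "sigma2 \<gamma> W V = {lam. (\<exists>\<psi>\<in>Eig W V lam. \<exists>k. formB \<gamma> k \<psi>) \<and> card (Aset \<gamma> W V lam) = 1}"

definition sigma3 :: "real \<Rightarrow> (real \<Rightarrow> complex) \<Rightarrow> (real \<Rightarrow> complex) \<Rightarrow> real set" where
  "sigma3 \<gamma> W V = {lam. (\<exists>\<psi>\<in>Eig W V lam. \<exists>k1 k2. formC \<gamma> k1 k2 \<psi>) \<and> card (Aset \<gamma> W V lam) = 2}"

definition cspan :: "(real \<Rightarrow> complex) set \<Rightarrow> (real \<Rightarrow> complex) set" where
  "cspan S = module.span (\<lambda>(c::complex) f x. c * f x) S"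

end

theory Submission
  imports Defs
begin

lemma PC_cont: assumes "continuous_on UNIV f" shows "PC f"
  unfolding PC_def
proof (intro exI[of _ "{}"] conjI allI impI)
  fix x show "isCont f x" using assms by (simp add: continuous_on_eq_continuous_at)
next
  fix a b show "f absolutely_integrable_on {a..b}"
    using assms by (intro absolutely_integrable_continuous_real) (auto intro: continuous_on_subset)
qed simp

lemma PC_add: assumes "PC f" "PC g" shows "PC (\<lambda>x. f x + g x)"
proof -
  obtain D1 where D1: "\<forall>a b. finite (D1 \<inter> {a..b})" "\<forall>x. x \<notin> D1 \<longrightarrow> isCont f x" "\<forall>a b. f absolutely_integrable_on {a..b}"
    using assms(1) unfolding PC_def by blast
  obtain D2 where D2: "\<forall>a b. finite (D2 \<inter> {a..b})" "\<forall>x. x \<notin> D2 \<longrightarrow> isCont g x" "\<forall>a b. g absolutely_integrable_on {a..b}"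
    using assms(2) unfolding PC_def by blast
  show ?thesis unfolding PC_def
  proof (intro exI[of _ "D1 \<union> D2"] conjI allI impI)
    fix a b show "finite ((D1 \<union> D2) \<inter> {a..b})" using D1 D2 by (simp add: Int_Un_distrib2)
  next
    fix x assume "x \<notin> D1 \<union> D2" thus "isCont (\<lambda>x. f x + g x) x" using D1 D2 by (auto intro: continuous_intros)
  next
    fix a b show "(\<lambda>x. f x + g x) absolutely_integrable_on {a..b}"
      using D1 D2 by (intro set_integral_add) auto
  qed
qed

lemma PC_mult: assumes "continuous_on UNIV g" "PC f" shows "PC (\<lambda>x. g x * f x)"
proof -
  obtain D1 where D1: "\<forall>a b. finite (D1 \<inter> {a..b})" "\<forall>x. x \<notin> D1 \<longrightarrow> isCont f x" "\<forall>a b. f absolutely_integrable_on {a..b}"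
    using assms(2) unfolding PC_def by blast
  show ?thesis unfolding PC_def
  proof (intro exI[of _ "D1"] conjI allI impI)
    fix a b show "finite (D1 \<inter> {a..b})" using D1 by simp
  next
    fix x assume "x \<notin> D1" thus "isCont (\<lambda>x. g x * f x) x" using D1 assms(1)
      by (auto intro!: continuous_intros simp: continuous_on_eq_continuous_at)
  next
    fix a b
    have cg: "continuous_on {a..b} g" using assms(1) by (auto intro: continuous_on_subset)
    show "(\<lambda>x. g x * f x) absolutely_integrable_on {a..b}"
    proof (rule absolutely_integrable_bounded_measurable_product[where h="(*)"])
      show "bilinear ((*) :: complex \<Rightarrow> complex \<Rightarrow> complex)" by (rule bilinear_times)
      show "g \<in> borel_measurable (lebesgue_on {a..b})"
        using cg by (intro continuous_imp_measurable_on_sets_lebesgue) auto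
      show "{a..b} \<in> sets lebesgue" by simp
      show "bounded (g ` {a..b})" using cg by (intro compact_imp_bounded compact_continuous_image) auto
      show "f absolutely_integrable_on {a..b}" using D1 by auto
    qed
  qed
qed

lemma abs_int_shift:
  fixes f :: "real \<Rightarrow> complex"
  assumes "\<forall>a b. f absolutely_integrable_on {a..b}"
  shows "(\<lambda>x. f (x + c)) absolutely_integrable_on {a..b}"
proof -
  have i1: "f integrable_on {a+c..b+c}" and i2: "(\<lambda>x. norm (f x)) integrable_on {a+c..b+c}"
    using assms unfolding absolutely_integrable_on_def by auto
  have *: "\<And>h::real\<Rightarrow>'b::real_normed_vector. h integrable_on {a+c..b+c} \<Longrightarrow> (\<lambda>x. h (x + c)) integrable_on {a..b}"
  proof -
    fix h :: "real \<Rightarrow> 'b::real_normed_vector" assume "h integrable_on {a+c..b+c}"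
    then obtain I where "(h has_integral I) (cbox (a+c) (b+c))" by (auto simp: integrable_on_def)
    with has_integral_affinity_iff[where m=1 and f=h and I=I and c=c and a="a+c" and b="b+c"] have "((\<lambda>x. h (1 *\<^sub>R x + c)) has_integral (I /\<^sub>R 1 ^ DIM(real))) (cbox ((a+c-c) /\<^sub>R 1) ((b+c-c) /\<^sub>R 1))"
      by simp
    thus "(\<lambda>x. h (x + c)) integrable_on {a..b}" by (auto simp: integrable_on_def)
  qed
  show ?thesis unfolding absolutely_integrable_on_def using *[OF i1] *[OF i2] by simp
qed

lemma PC_shift: assumes "PC f" shows "PC (\<lambda>x. f (x + c))"
proof -
  obtain D1 where D1: "\<forall>a b. finite (D1 \<inter> {a..b})" "\<forall>x. x \<notin> D1 \<longrightarrow> isCont f x" "\<forall>a b. f absolutely_integrable_on {a..b}"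
    using assms unfolding PC_def by blast
  show ?thesis unfolding PC_def
  proof (intro exI[of _ "(\<lambda>x. x - c) ` D1"] conjI allI impI)
    fix a b
    have "(\<lambda>x. x - c) ` D1 \<inter> {a..b} = (\<lambda>x. x - c) ` (D1 \<inter> {a+c..b+c})" by auto
    thus "finite ((\<lambda>x. x - c) ` D1 \<inter> {a..b})" using D1 by simp
  next
    fix x assume "x \<notin> (\<lambda>x. x - c) ` D1"
    hence "x + c \<notin> D1" by force
    hence "isCont f (x + c)" using D1 by auto
    thus "isCont (\<lambda>x. f (x + c)) x" by (intro continuous_intros isCont_o2[where f="\<lambda>x. x + c" and g=f, unfolded o_def]) auto
  next
    fix a b show "(\<lambda>x. f (x + c)) absolutely_integrable_on {a..b}" using abs_int_shift D1 by blast
  qed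
qed

lemma Cp2_iff: "Cp 2 f \<longleftrightarrow> (\<forall>x. f differentiable (at x)) \<and> (\<forall>x. D1 f differentiable (at x)) \<and> PC (D1 (D1 f))"
  by (simp add: numeral_2_eq_2)

lemma D1_eq: assumes "\<And>x. (f has_vector_derivative f' x) (at x)" shows "D1 f = f'"
  unfolding D1_def using vector_derivative_at assms by (auto simp: fun_eq_iff)

lemma hvd_eq: "(h has_vector_derivative d) F \<Longrightarrow> d = d' \<Longrightarrow> (h has_vector_derivative d') F" by simp

lemma Cp2_intro:
  assumes "\<And>x. (f has_vector_derivative f1 x) (at x)" "\<And>x. (f1 has_vector_derivative f2 x) (at x)" "PC f2"
  shows "Cp 2 f" "D1 f = f1" "D1 (D1 f) = f2"
proof -
  show d1: "D1 f = f1" by (rule D1_eq[OF assms(1)])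
  show d2: "D1 (D1 f) = f2" unfolding d1 by (rule D1_eq[OF assms(2)])
  have d3: "D1 f1 = f2" by (rule D1_eq[OF assms(2)])
  show "Cp 2 f" unfolding Cp2_iff d1 d3 using assms
    by (auto simp: differentiable_def has_vector_derivative_def)
qed

lemma Cp2_D:
  assumes "Cp 2 f"
  shows "(f has_vector_derivative D1 f x) (at x)" "(D1 f has_vector_derivative D1 (D1 f) x) (at x)"
    "PC (D1 (D1 f))" "continuous_on UNIV f" "continuous_on UNIV (D1 f)"
proof -
  have a: "\<forall>x. f differentiable (at x)" "\<forall>x. D1 f differentiable (at x)" "PC (D1 (D1 f))"
    using assms unfolding Cp2_iff by auto
  have b: "(f has_vector_derivative D1 f x) (at x)" for x
    using a(1) vector_derivative_works unfolding D1_def by blast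
  have c: "(D1 f has_vector_derivative D1 (D1 f) x) (at x)" for x
    using a(2) vector_derivative_works unfolding D1_def[of "D1 f"] by blast
  show "(f has_vector_derivative D1 f x) (at x)" "(D1 f has_vector_derivative D1 (D1 f) x) (at x)" "PC (D1 (D1 f))"
    using a b c by auto
  show "continuous_on UNIV f" by (rule continuous_on_vector_derivative[of UNIV f "D1 f"]) (simp add: b)
  show "continuous_on UNIV (D1 f)" by (rule continuous_on_vector_derivative[of UNIV "D1 f" "D1 (D1 f)"]) (simp add: c)
qed

lemma Cp2_mult:
  assumes g: "\<And>x. (g has_vector_derivative g1 x) (at x)" "\<And>x. (g1 has_vector_derivative g2 x) (at x)"
    "continuous_on UNIV g2" and q: "Cp 2 q"
  shows "Cp 2 (\<lambda>x. g x * q x)" "D1 (\<lambda>x. g x * q x) = (\<lambda>x. g1 x * q x + g x * D1 q x)"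
    "D1 (D1 (\<lambda>x. g x * q x)) = (\<lambda>x. g2 x * q x + 2 * (g1 x * D1 q x) + g x * D1 (D1 q) x)"
proof -
  note qd = Cp2_D[OF q]
  have cg: "continuous_on UNIV g" "continuous_on UNIV g1"
    by (rule continuous_on_vector_derivative[of UNIV g g1], simp add: g)
       (rule continuous_on_vector_derivative[of UNIV g1 g2], simp add: g)
  have d1: "((\<lambda>x. g x * q x) has_vector_derivative (g1 x * q x + g x * D1 q x)) (at x)" for x
    by (rule hvd_eq[OF has_vector_derivative_mult[OF g(1) qd(1)]]) (simp add: algebra_simps)
  have d2: "((\<lambda>x. g1 x * q x + g x * D1 q x) has_vector_derivative (g2 x * q x + 2 * (g1 x * D1 q x) + g x * D1 (D1 q) x)) (at x)" for x
    by (rule hvd_eq[OF has_vector_derivative_add[OF has_vector_derivative_mult[OF g(2) qd(1)] has_vector_derivative_mult[OF g(1) qd(2)]]])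
      (simp add: algebra_simps)
  have pc: "PC (\<lambda>x. g2 x * q x + 2 * (g1 x * D1 q x) + g x * D1 (D1 q) x)"
    by (intro PC_add PC_mult PC_cont qd cg g continuous_intros)
  show "Cp 2 (\<lambda>x. g x * q x)" "D1 (\<lambda>x. g x * q x) = (\<lambda>x. g1 x * q x + g x * D1 q x)"
    "D1 (D1 (\<lambda>x. g x * q x)) = (\<lambda>x. g2 x * q x + 2 * (g1 x * D1 q x) + g x * D1 (D1 q) x)"
    using Cp2_intro[OF d1 d2 pc] by auto
qed

lemma Cp2_lin:
  assumes f: "Cp 2 f" and h: "Cp 2 h"
  shows "Cp 2 (\<lambda>x. a * f x + b * h x)" "D1 (\<lambda>x. a * f x + b * h x) = (\<lambda>x. a * D1 f x + b * D1 h x)"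
    "D1 (D1 (\<lambda>x. a * f x + b * h x)) = (\<lambda>x. a * D1 (D1 f) x + b * D1 (D1 h) x)"
proof -
  note fd = Cp2_D[OF f] and hd = Cp2_D[OF h]
  have d1: "((\<lambda>x. a * f x + b * h x) has_vector_derivative (a * D1 f x + b * D1 h x)) (at x)" for x
    by (intro has_vector_derivative_add has_vector_derivative_mult_right fd hd)
  have d2: "((\<lambda>x. a * D1 f x + b * D1 h x) has_vector_derivative (a * D1 (D1 f) x + b * D1 (D1 h) x)) (at x)" for x
    by (intro has_vector_derivative_add has_vector_derivative_mult_right fd hd)
  have pc: "PC (\<lambda>x. a * D1 (D1 f) x + b * D1 (D1 h) x)"
    by (intro PC_add PC_mult[where g="\<lambda>_. a"] PC_mult[where g="\<lambda>_. b"] fd hd continuous_intros)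
  show "Cp 2 (\<lambda>x. a * f x + b * h x)" "D1 (\<lambda>x. a * f x + b * h x) = (\<lambda>x. a * D1 f x + b * D1 h x)"
    "D1 (D1 (\<lambda>x. a * f x + b * h x)) = (\<lambda>x. a * D1 (D1 f) x + b * D1 (D1 h) x)"
    using Cp2_intro[OF d1 d2 pc] by auto
qed

lemma hvd_shift:
  assumes "(f has_vector_derivative d) (at (x + c))"
  shows "((\<lambda>x. f (x + c)) has_vector_derivative d) (at x)"
proof -
  have "((\<lambda>x. x + c) has_vector_derivative 1) (at x)"
  proof -
    have "((\<lambda>x. x + c) has_real_derivative 1) (at x)" by (auto intro!: derivative_eq_intros)
    thus ?thesis by (simp add: has_real_derivative_iff_has_vector_derivative)
  qed
  from vector_diff_chain_at[OF this assms] show ?thesis by (simp add: o_def)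
qed

lemma Cp2_shift:
  assumes f: "Cp 2 f"
  shows "Cp 2 (\<lambda>x. f (x + c))" "D1 (\<lambda>x. f (x + c)) = (\<lambda>x. D1 f (x + c))"
    "D1 (D1 (\<lambda>x. f (x + c))) = (\<lambda>x. D1 (D1 f) (x + c))"
proof -
  note fd = Cp2_D[OF f]
  have d1: "((\<lambda>x. f (x + c)) has_vector_derivative D1 f (x + c)) (at x)" for x
    by (rule hvd_shift fd)+
  have d2: "((\<lambda>x. D1 f (x + c)) has_vector_derivative D1 (D1 f) (x + c)) (at x)" for x
    by (rule hvd_shift fd)+
  have pc: "PC (\<lambda>x. D1 (D1 f) (x + c))" by (rule PC_shift fd)+
  show "Cp 2 (\<lambda>x. f (x + c))" "D1 (\<lambda>x. f (x + c)) = (\<lambda>x. D1 f (x + c))"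
    "D1 (D1 (\<lambda>x. f (x + c))) = (\<lambda>x. D1 (D1 f) (x + c))"
    using Cp2_intro[OF d1 d2 pc] by auto
qed

definition ee :: "complex \<Rightarrow> real \<Rightarrow> complex" where
  "ee k x = exp (\<i> * k * complex_of_real x)"

lemma ee_d1: "(ee k has_vector_derivative (\<i> * k * ee k x)) (at x)"
proof -
  have "((\<lambda>z. exp (\<i> * k * z)) has_field_derivative (\<i> * k * exp (\<i> * k * complex_of_real x))) (at (complex_of_real x))"
    by (auto intro!: derivative_eq_intros)
  from has_vector_derivative_real_field[OF this] show ?thesis unfolding ee_def by (simp add: fun_eq_iff)
qed

lemma ee_d1': "((\<lambda>x. \<i> * k * ee k x) has_vector_derivative ((\<i> * k)^2 * ee k x)) (at x)"
  by (rule hvd_eq[OF has_vector_derivative_mult_right[OF ee_d1]]) (simp add: power2_eq_square)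

lemma ee_cont: "continuous_on UNIV (\<lambda>x. c * ee k x)"
  unfolding ee_def by (intro continuous_intros)

lemma x_d1: "((\<lambda>x. complex_of_real x) has_vector_derivative 1) (at x)"
  using has_vector_derivative_of_real[OF DERIV_ident] by simp

lemma one_d1: "((\<lambda>x. 1::complex) has_vector_derivative 0) (at x)"
  by (rule has_vector_derivative_const)

lemmas Cp2_ee = Cp2_mult[OF ee_d1 ee_d1' ee_cont]
lemmas Cp2_x = Cp2_mult[OF x_d1 one_d1 continuous_on_const]

lemma ee_nz[simp]: "ee k x \<noteq> 0" by (simp add: ee_def)

lemma ee_add: "ee k (x + y) = ee k x * ee k y"
proof -
  have "\<i> * k * complex_of_real (x + y) = \<i> * k * complex_of_real x + \<i> * k * complex_of_real y"
    by (simp add: distrib_left)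
  thus ?thesis unfolding ee_def by (simp only: exp_add)
qed

lemma ee_sum: "ee k x * ee k' x = ee (k + k') x"
proof -
  have "\<i> * (k + k') * complex_of_real x = \<i> * k * complex_of_real x + \<i> * k' * complex_of_real x"
    by (simp add: distrib_left distrib_right)
  thus ?thesis unfolding ee_def by (simp only: exp_add)
qed

lemma ee_zero[simp]: "ee 0 x = 1" by (simp add: ee_def)

lemma ee_neg: "ee (-k) x * ee k x = 1"
  using ee_sum[of "-k" x k] by simp

lemma Cp2_add:
  assumes "Cp 2 f" "Cp 2 h"
  shows "Cp 2 (\<lambda>x. f x + h x)" "D1 (\<lambda>x. f x + h x) = (\<lambda>x. D1 f x + D1 h x)"
    "D1 (D1 (\<lambda>x. f x + h x)) = (\<lambda>x. D1 (D1 f) x + D1 (D1 h) x)"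
  using Cp2_lin[OF assms, of 1 1] by simp_all

lemma Cp2_scale:
  assumes "Cp 2 f"
  shows "Cp 2 (\<lambda>x. a * f x)" "D1 (\<lambda>x. a * f x) = (\<lambda>x. a * D1 f x)"
    "D1 (D1 (\<lambda>x. a * f x)) = (\<lambda>x. a * D1 (D1 f) x)"
  using Cp2_lin[OF assms assms, of a 0] by simp_all

lemma Lop_ee:
  assumes "Cp 2 p"
  shows "Lop W V (\<lambda>x. ee k x * p x) = (\<lambda>x. ee k x * Dk W V k p x)"
  unfolding Lop_def Dk_def Cp2_ee(3)[OF assms] unfolding Cp2_ee(2)[OF assms]
  by (simp add: fun_eq_iff algebra_simps power2_eq_square)

lemma Eig_ee:
  assumes "Cp 2 p"
  shows "(\<lambda>x. ee k x * p x) \<in> Eig W V lam \<longleftrightarrow> Dk W V k p = (\<lambda>x. complex_of_real lam * p x)"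
proof -
  have "(\<lambda>x. ee k x * Dk W V k p x) = (\<lambda>x. complex_of_real lam * (ee k x * p x)) \<longleftrightarrow>
        Dk W V k p = (\<lambda>x. complex_of_real lam * p x)"
    by (auto simp: fun_eq_iff algebra_simps)
  thus ?thesis unfolding Eig_def using Cp2_ee(1)[OF assms] Lop_ee[OF assms] by simp
qed

lemma Dk_x:
  assumes "Cp 2 p1" "Cp 2 p2"
  shows "Cp 2 (\<lambda>x. p1 x + complex_of_real x * p2 x)"
    "Dk W V k (\<lambda>x. p1 x + complex_of_real x * p2 x) = (\<lambda>x. Dk W V k p1 x + complex_of_real x * Dk W V k p2 x
        - 2 * D1 p2 x + (W x - 2 * \<i> * k) * p2 x)"
proof -
  note X = Cp2_x[OF assms(2)]
  note S = Cp2_add[OF assms(1) X(1)]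
  show "Cp 2 (\<lambda>x. p1 x + complex_of_real x * p2 x)" by (rule S(1))
  show "Dk W V k (\<lambda>x. p1 x + complex_of_real x * p2 x) = (\<lambda>x. Dk W V k p1 x + complex_of_real x * Dk W V k p2 x
        - 2 * D1 p2 x + (W x - 2 * \<i> * k) * p2 x)"
    unfolding Dk_def S(3) unfolding S(2) X(3) unfolding X(2) by (simp add: fun_eq_iff algebra_simps)
qed

lemma Eig_lin:
  assumes "f \<in> Eig W V lam" "h \<in> Eig W V lam"
  shows "(\<lambda>x. a * f x + b * h x) \<in> Eig W V lam"
proof -
  have f: "Cp 2 f" "Lop W V f = (\<lambda>x. complex_of_real lam * f x)"
   and h: "Cp 2 h" "Lop W V h = (\<lambda>x. complex_of_real lam * h x)" using assms by (auto simp: Eig_def)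
  note L = Cp2_lin[OF f(1) h(1), of a b]
  have "Lop W V (\<lambda>x. a * f x + b * h x) = (\<lambda>x. a * Lop W V f x + b * Lop W V h x)"
    unfolding Lop_def L(3) unfolding L(2) by (simp add: fun_eq_iff algebra_simps)
  also have "\<dots> = (\<lambda>x. complex_of_real lam * (a * f x + b * h x))"
    unfolding f(2) h(2) by (simp add: fun_eq_iff algebra_simps)
  finally show ?thesis unfolding Eig_def using L(1) by simp
qed

lemma Eig_shift:
  assumes "f \<in> Eig W V lam" "\<forall>x. W (x + c) = W x" "\<forall>x. V (x + c) = V x"
  shows "(\<lambda>x. f (x + c)) \<in> Eig W V lam"
proof -
  have f: "Cp 2 f" "Lop W V f = (\<lambda>x. complex_of_real lam * f x)" using assms by (auto simp: Eig_def)
  note L = Cp2_shift[OF f(1), of c]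
  have "Lop W V (\<lambda>x. f (x + c)) = (\<lambda>x. Lop W V f (x + c))"
    unfolding Lop_def L(3) unfolding L(2) using assms(2,3) by (simp add: fun_eq_iff)
  also have "\<dots> = (\<lambda>x. complex_of_real lam * f (x + c))" unfolding f(2) by simp
  finally show ?thesis unfolding Eig_def using L(1) by simp
qed

lemma Eig_Cp2: "f \<in> Eig W V lam \<Longrightarrow> Cp 2 f" by (simp add: Eig_def)

lemma Eig_D1_lin:
  assumes "f \<in> Eig W V lam" "h \<in> Eig W V lam"
  shows "D1 (\<lambda>x. a * f x + b * h x) = (\<lambda>x. a * D1 f x + b * D1 h x)"
  using Cp2_lin[OF Eig_Cp2[OF assms(1)] Eig_Cp2[OF assms(2)]] by simp

lemma Eig_eq: "Eig W V lam = {f. Cp 2 f \<and> (\<forall>x. D1 (D1 f) x = W x * D1 f x + (V x - complex_of_real lam) * f x)}"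
  unfolding Eig_def Lop_def by (auto simp: fun_eq_iff algebra_simps)

lemma ftc_bound:
  fixes F F' :: "real \<Rightarrow> complex" and B :: "real \<Rightarrow> real"
  assumes d: "\<And>t. (F has_vector_derivative F' t) (at t)"
    and bnd: "\<And>t. t \<in> {a..b} \<Longrightarrow> norm (F' t) \<le> B t" and Bi: "B integrable_on {a..b}"
    and B0: "\<And>t. t \<in> {a..b} \<Longrightarrow> 0 \<le> B t"
    and s: "s \<in> {a..b}" and x: "x \<in> {a..b}"
  shows "norm (F x - F s) \<le> integral {a..b} B"
proof -
  have main: "norm (F v - F u) \<le> integral {a..b} B" if uv: "u \<le> v" "u \<in> {a..b}" "v \<in> {a..b}" for u v
  proof -
    have sub: "{u..v} \<subseteq> {a..b}" using uv by auto
    have hi: "(F' has_integral (F v - F u)) {u..v}"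
      by (rule fundamental_theorem_of_calculus[OF uv(1)]) (auto intro: has_vector_derivative_at_within d)
    have "norm (F v - F u) = norm (integral {u..v} F')" using hi by (simp add: integral_unique)
    also have "\<dots> \<le> integral {u..v} B"
      by (rule integral_norm_bound_integral) (use hi sub bnd integrable_on_subinterval[OF Bi sub] in auto)
    also have "\<dots> \<le> integral {a..b} B"
      by (rule integral_subset_le[OF sub integrable_on_subinterval[OF Bi sub] Bi]) (use B0 in auto)
    finally show ?thesis .
  qed
  show ?thesis
  proof (cases "s \<le> x")
    case True thus ?thesis using main[OF True s x] by simp
  next
    case False thus ?thesis using main[of x s] s x by (simp add: norm_minus_commute)
  qed
qed

lemma uniq_local:
  assumes PW: "PC W" "PC V" and psi: "\<psi> \<in> Eig W V lam" and z: "\<psi> s = 0" "D1 \<psi> s = 0"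
  shows "\<exists>h>0. \<forall>x\<in>{s-h..s+h}. \<psi> x = 0 \<and> D1 \<psi> x = 0"
proof -
  have C: "Cp 2 \<psi>" and eq: "\<And>x. D1 (D1 \<psi>) x = W x * D1 \<psi> x + (V x - complex_of_real lam) * \<psi> x"
    using psi unfolding Eig_eq by auto
  note cd = Cp2_D[OF C]
  define g0 where "g0 t = norm (W t) + norm (V t) + norm (complex_of_real lam)" for t
  have g0i: "g0 integrable_on {a..b}" for a b
  proof -
    have "W absolutely_integrable_on {a..b}" "V absolutely_integrable_on {a..b}"
      using PW unfolding PC_def by auto
    hence "(\<lambda>t. norm (W t)) integrable_on {a..b}" "(\<lambda>t. norm (V t)) integrable_on {a..b}"
      unfolding absolutely_integrable_on_def by auto
    thus ?thesis unfolding g0_def by (intro integrable_add integrable_const_ivl)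
  qed
  have g00: "0 \<le> g0 t" for t unfolding g0_def by simp
  define G where "G x = integral {s-1..x} g0" for x
  have "continuous_on {s-1..s+1} G" unfolding G_def by (rule indefinite_integral_continuous_1[OF g0i])
  then obtain d where d: "d > 0" "\<And>x'. x' \<in> {s-1..s+1} \<Longrightarrow> dist x' s < d \<Longrightarrow> dist (G x') (G s) < 1/8"
    unfolding continuous_on_iff by (metis atLeastAtMost_iff add_increasing2 diff_le_eq le_add_same_cancel1
        linorder_not_le zero_less_one less_le_not_le zero_less_divide_iff zero_less_numeral)
  define h where "h = min (d/2) (1/8)"
  have h0: "h > 0" "h \<le> 1/8" "h < d" using d(1) by (auto simp: h_def)
  have Gp: "dist (G (s+h)) (G s) < 1/8" and Gm: "dist (G (s-h)) (G s) < 1/8"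
    using d(2)[of "s+h"] d(2)[of "s-h"] h0 by (auto simp: dist_real_def)
  define I where "I = integral {s-h..s+h} g0"
  have "integral {s-1..s-h} g0 + integral {s-h..s+h} g0 = integral {s-1..s+h} g0"
    by (rule Henstock_Kurzweil_Integration.integral_combine) (use h0 g0i in auto)
  hence "I = G (s+h) - G (s-h)" unfolding I_def G_def by simp
  hence I14: "I < 1/4" using Gp Gm unfolding dist_real_def by arith
  define u where "u x = norm (\<psi> x) + norm (D1 \<psi> x)" for x
  have uc: "continuous_on {s-h..s+h} u" unfolding u_def
    by (intro continuous_intros continuous_on_subset[OF cd(4)] continuous_on_subset[OF cd(5)]) auto
  obtain xm where xm: "xm \<in> {s-h..s+h}" "\<And>y. y \<in> {s-h..s+h} \<Longrightarrow> u y \<le> u xm"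
    using continuous_attains_sup[OF compact_Icc _ uc] h0 by fastforce
  define M where "M = u xm"
  have M0: "0 \<le> M" unfolding M_def u_def by simp
  have sI: "s \<in> {s-h..s+h}" using h0 by auto
  have bnd: "u x \<le> M * (2*h + I)" if x: "x \<in> {s-h..s+h}" for x
  proof -
    have b1: "norm (\<psi> x - \<psi> s) \<le> integral {s-h..s+h} (\<lambda>_. M)"
    proof (rule ftc_bound[OF cd(1) _ _ _ sI x])
      fix t assume "t \<in> {s-h..s+h}" thus "norm (D1 \<psi> t) \<le> M" using xm(2)[of t] norm_ge_zero[of "\<psi> t"] unfolding M_def u_def by linarith
    qed (use M0 in auto)
    have b2: "norm (D1 \<psi> x - D1 \<psi> s) \<le> integral {s-h..s+h} (\<lambda>t. M * g0 t)"
    proof (rule ftc_bound[OF cd(2) _ _ _ sI x])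
      fix t assume t: "t \<in> {s-h..s+h}"
      have n1: "norm (\<psi> t) \<le> M" "norm (D1 \<psi> t) \<le> M" using xm(2)[OF t] norm_ge_zero[of "\<psi> t"] norm_ge_zero[of "D1 \<psi> t"] unfolding M_def u_def by linarith+
      have "norm (D1 (D1 \<psi>) t) \<le> norm (W t) * norm (D1 \<psi> t) + norm (V t - complex_of_real lam) * norm (\<psi> t)"
        unfolding eq by (metis norm_mult norm_triangle_ineq)
      also have "\<dots> \<le> norm (W t) * M + (norm (V t) + norm (complex_of_real lam)) * M"
        by (intro add_mono mult_mono n1 norm_triangle_ineq4) auto
      also have "\<dots> = M * g0 t" unfolding g0_def by (simp add: algebra_simps)
      finally show "norm (D1 (D1 \<psi>) t) \<le> M * g0 t" .
    next
      show "(\<lambda>t. M * g0 t) integrable_on {s-h..s+h}" using integrable_cmul[OF g0i, of M] by simp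
    qed (use M0 g00 in auto)
    have e1: "integral {s-h..s+h} (\<lambda>_. M) = 2*h*M" using h0 by simp
    have e2: "integral {s-h..s+h} (\<lambda>t. M * g0 t) = M * I" unfolding I_def by simp
    have n1: "norm (\<psi> x) \<le> 2*h*M" using b1[unfolded e1] z by simp
    have n2: "norm (D1 \<psi> x) \<le> M*I" using b2[unfolded e2] z by simp
    have "M * (2*h + I) = 2*h*M + M*I" by (simp add: algebra_simps)
    thus ?thesis using n1 n2 unfolding u_def by linarith
  qed
  have "M \<le> M * (2*h + I)" using bnd[OF xm(1)] unfolding M_def .
  moreover have "M * (2*h + I) \<le> M * (1/2)" using h0 I14 M0 by (intro mult_left_mono) auto
  ultimately have "M \<le> 0" by linarith
  hence "u x \<le> 0" if "x \<in> {s-h..s+h}" for x using xm(2)[OF that] unfolding M_def by simp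
  have "\<forall>x\<in>{s-h..s+h}. \<psi> x = 0 \<and> D1 \<psi> x = 0"
  proof
    fix x assume "x \<in> {s-h..s+h}"
    hence n: "norm (\<psi> x) + norm (D1 \<psi> x) \<le> 0" using \<open>\<And>x. x \<in> {s-h..s+h} \<Longrightarrow> u x \<le> 0\<close> unfolding u_def by blast
    have "norm (\<psi> x) = 0" "norm (D1 \<psi> x) = 0"
      using n norm_ge_zero[of "\<psi> x"] norm_ge_zero[of "D1 \<psi> x"] by linarith+
    thus "\<psi> x = 0 \<and> D1 \<psi> x = 0" by simp
  qed
  thus ?thesis using h0 by blast
qed

lemma uniq:
  assumes PW: "PC W" "PC V" and psi: "\<psi> \<in> Eig W V lam" and z: "\<psi> s = 0" "D1 \<psi> s = 0"
  shows "\<psi> x = 0"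
proof -
  define Z where "Z = {x. \<psi> x = 0 \<and> D1 \<psi> x = 0}"
  note cd = Cp2_D[OF Eig_Cp2[OF psi]]
  have "closed Z" unfolding Z_def Collect_conj_eq
    by (intro closed_Int closed_Collect_eq cd continuous_on_const)
  moreover have "open Z"
  proof (rule openI)
    fix y assume "y \<in> Z"
    then obtain h where "h > 0" "\<forall>x\<in>{y-h..y+h}. \<psi> x = 0 \<and> D1 \<psi> x = 0"
      using uniq_local[OF PW psi] unfolding Z_def by blast
    moreover have "ball y h \<subseteq> {y-h..y+h}" by (auto simp: dist_real_def)
    ultimately show "\<exists>e>0. ball y e \<subseteq> Z" unfolding Z_def by blast
  qed
  moreover have "s \<in> Z" using z unfolding Z_def by simp
  ultimately have "Z = UNIV" using clopen by blast
  thus ?thesis unfolding Z_def by blast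
qed

lemma cls_eq:
  assumes g: "\<gamma> > 0"
  shows "cls \<gamma> k = cls \<gamma> k' \<longleftrightarrow> ee k \<gamma> = ee k' \<gamma>"
proof
  assume "cls \<gamma> k = cls \<gamma> k'"
  moreover have "k' \<in> cls \<gamma> k'" unfolding cls_def by (auto intro: range_eqI[where x=0])
  ultimately obtain m :: int where m: "k' = k + complex_of_real (2 * real_of_int m * pi / \<gamma>)"
    unfolding cls_def by auto
  have "\<i> * k' * complex_of_real \<gamma> = \<i> * k * complex_of_real \<gamma> + of_int (2 * m) * pi * \<i>"
    unfolding m using g by (simp add: algebra_simps)
  thus "ee k \<gamma> = ee k' \<gamma>" unfolding ee_def by (metis exp_eq)
next
  assume "ee k \<gamma> = ee k' \<gamma>"
  then obtain n :: int where n: "\<i> * k' * complex_of_real \<gamma> = \<i> * k * complex_of_real \<gamma> + of_int (2 * n) * pi * \<i>"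
    unfolding ee_def by (metis exp_eq)
  have k': "k' = k + complex_of_real (2 * real_of_int n * pi / \<gamma>)"
  proof -
    have "\<i> * complex_of_real \<gamma> * k' = \<i> * complex_of_real \<gamma> * (k + complex_of_real (2 * real_of_int n * pi / \<gamma>))"
      using n g by (simp add: algebra_simps)
    moreover have "\<i> * complex_of_real \<gamma> \<noteq> 0" using g by simp
    ultimately show ?thesis by simp
  qed
  define c where "c m = complex_of_real (2 * real_of_int m * pi / \<gamma>)" for m :: int
  have f: "k' + c m = k + c (m + n)" for m unfolding k' c_def by (simp add: algebra_simps add_divide_distrib)
  have cl: "cls \<gamma> kk = range (\<lambda>m. kk + c m)" for kk unfolding cls_def c_def by simp
  have "cls \<gamma> k' = cls \<gamma> k"
  proof (intro set_eqI iffI)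
    fix z assume "z \<in> cls \<gamma> k'"
    then obtain m where "z = k' + c m" unfolding cl by auto
    hence "z = k + c (m + n)" using f by simp
    thus "z \<in> cls \<gamma> k" unfolding cl by (rule range_eqI)
  next
    fix z assume "z \<in> cls \<gamma> k"
    then obtain m where "z = k + c m" unfolding cl by auto
    hence "z = k' + c (m - n)" using f[of "m - n"] by simp
    thus "z \<in> cls \<gamma> k'" unfolding cl by (rule range_eqI)
  qed
  thus "cls \<gamma> k = cls \<gamma> k'" by simp
qed

lemma ee_exists: assumes "\<gamma> > 0" "b \<noteq> 0" shows "\<exists>k. ee k \<gamma> = b"
proof
  have "\<i> * (Ln b / (\<i> * complex_of_real \<gamma>)) * complex_of_real \<gamma> = Ln b" using assms by simp
  thus "ee (Ln b / (\<i> * complex_of_real \<gamma>)) \<gamma> = b" unfolding ee_def using assms by simp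
qed

lemma ee_per: "ee (-k) (x + g) * ee k g = ee (-k) x"
proof -
  have "ee (-k) (x + g) * ee k g = ee (-k) x * (ee (-k) g * ee k g)" by (simp add: ee_add mult.assoc)
  thus ?thesis by (simp add: ee_neg)
qed

lemma G1:
  assumes C: "Cp 2 cc" and per: "\<And>x. cc (x + \<gamma>) = ee k \<gamma> * cc x"
  shows "Cpg 2 \<gamma> (\<lambda>x. ee (-k) x * cc x)" "cc = (\<lambda>x. ee k x * (ee (-k) x * cc x))"
proof -
  show "cc = (\<lambda>x. ee k x * (ee (-k) x * cc x))"
    using ee_neg by (simp add: fun_eq_iff mult.assoc[symmetric] mult.commute[of "ee k _"])
  have "ee (-k) (x + \<gamma>) * cc (x + \<gamma>) = ee (-k) x * cc x" for x
    unfolding per using ee_per[of k x \<gamma>] by (simp add: mult.assoc[symmetric])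
  thus "Cpg 2 \<gamma> (\<lambda>x. ee (-k) x * cc x)" unfolding Cpg_def using Cp2_ee(1)[OF C, of "-k"] by simp
qed

lemma G2:
  assumes C1: "Cp 2 \<psi>" and C2: "Cp 2 \<eta>" and pe: "\<And>x. \<eta> (x + \<gamma>) = ee k \<gamma> * \<eta> x"
    and pp: "\<And>x. \<psi> (x + \<gamma>) = ee k \<gamma> * (\<psi> x + complex_of_real \<gamma> * \<eta> x)"
  defines "P2 \<equiv> (\<lambda>x. ee (-k) x * \<eta> x)"
  defines "P1 \<equiv> (\<lambda>x. ee (-k) x * \<psi> x - complex_of_real x * P2 x)"
  shows "Cpg 2 \<gamma> P1" "Cpg 2 \<gamma> P2" "\<psi> = (\<lambda>x. ee k x * (P1 x + complex_of_real x * P2 x))"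
proof -
  show P2: "Cpg 2 \<gamma> P2" unfolding P2_def by (rule G1(1)[OF C2 pe])
  have CP2: "Cp 2 P2" using P2 by (simp add: Cpg_def)
  have "Cp 2 (\<lambda>x. 1 * (ee (-k) x * \<psi> x) + (-1) * (complex_of_real x * P2 x))"
    by (rule Cp2_lin(1)[OF Cp2_ee(1)[OF C1] Cp2_x(1)[OF CP2]])
  hence CP1: "Cp 2 P1" unfolding P1_def by simp
  have "P1 (x + \<gamma>) = P1 x" for x
  proof -
    have e: "ee (-k) (x + \<gamma>) * ee k \<gamma> = ee (-k) x" by (rule ee_per)
    have "P1 (x + \<gamma>) = (ee (-k) (x + \<gamma>) * ee k \<gamma>) * (\<psi> x + complex_of_real \<gamma> * \<eta> x)
          - complex_of_real (x + \<gamma>) * ((ee (-k) (x + \<gamma>) * ee k \<gamma>) * \<eta> x)"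
      unfolding P1_def P2_def pp pe by (simp add: algebra_simps)
    also have "\<dots> = P1 x" unfolding e P1_def P2_def by (simp add: algebra_simps)
    finally show ?thesis .
  qed
  thus "Cpg 2 \<gamma> P1" using CP1 by (simp add: Cpg_def)
  show "\<psi> = (\<lambda>x. ee k x * (P1 x + complex_of_real x * P2 x))"
    unfolding P1_def using ee_neg by (simp add: fun_eq_iff mult.assoc[symmetric] mult.commute[of "ee k _"])
qed

lemma ee_fold: "(\<lambda>x. exp (\<i> * k * complex_of_real x) * p x) = (\<lambda>x. ee k x * p x)"
  by (simp add: ee_def)

lemma QM_A: "\<psi> \<noteq> (\<lambda>x. 0) \<Longrightarrow> formA \<gamma> k \<psi> \<Longrightarrow> k \<in> QM \<gamma> \<psi>" by (simp add: QM_def)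
lemma QM_B: "formB \<gamma> k \<psi> \<Longrightarrow> k \<in> QM \<gamma> \<psi>" by (simp add: QM_def)
lemma QM_C: "formC \<gamma> k1 k2 \<psi> \<Longrightarrow> k1 \<in> QM \<gamma> \<psi> \<and> k2 \<in> QM \<gamma> \<psi>" by (auto simp: QM_def)

lemma Aset_I: "\<psi> \<in> Eig W V lam \<Longrightarrow> k \<in> QM \<gamma> \<psi> \<Longrightarrow> cls \<gamma> k \<in> Aset \<gamma> W V lam"
  unfolding Aset_def by blast

lemma fmodule: "module (\<lambda>(c::complex) (f::real \<Rightarrow> complex) x. c * f x)"
  by unfold_locales (auto simp: fun_eq_iff algebra_simps)

lemma alg2:
  fixes f0 f1 g0 g1 p0 p1 d :: complex
  assumes d: "d = f0*g1 - g0*f1" "d \<noteq> 0"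
  shows "(p0*g1 - g0*p1)/d * f0 + (f0*p1 - p0*f1)/d * g0 = p0"
    "(p0*g1 - g0*p1)/d * f1 + (f0*p1 - p0*f1)/d * g1 = p1"
proof -
  have "(p0*g1 - g0*p1)/d * f0 + (f0*p1 - p0*f1)/d * g0 = ((p0*g1 - g0*p1) * f0 + (f0*p1 - p0*f1) * g0)/d"
    by (simp add: add_divide_distrib)
  also have "\<dots> = (p0 * d) / d" by (simp add: d(1) algebra_simps)
  finally show "(p0*g1 - g0*p1)/d * f0 + (f0*p1 - p0*f1)/d * g0 = p0" using d(2) by simp
  have "(p0*g1 - g0*p1)/d * f1 + (f0*p1 - p0*f1)/d * g1 = ((p0*g1 - g0*p1) * f1 + (f0*p1 - p0*f1) * g1)/d"
    by (simp add: add_divide_distrib)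
  also have "\<dots> = (p1 * d) / d" by (simp add: d(1) algebra_simps)
  finally show "(p0*g1 - g0*p1)/d * f1 + (f0*p1 - p0*f1)/d * g1 = p1" using d(2) by simp
qed

locale floq =
  fixes \<gamma> :: real and W V :: "real \<Rightarrow> complex" and lam :: real
  assumes gpos: "\<gamma> > 0" and PW: "PC W" and PV: "PC V"
    and perW: "\<And>x. W (x + \<gamma>) = W x" and perV: "\<And>x. V (x + \<gamma>) = V x"
begin

definition det2 :: "(real \<Rightarrow> complex) \<Rightarrow> (real \<Rightarrow> complex) \<Rightarrow> complex" where
  "det2 f g = f 0 * D1 g 0 - g 0 * D1 f 0"

lemma T_in: "f \<in> Eig W V lam \<Longrightarrow> (\<lambda>x. f (x + \<gamma>)) \<in> Eig W V lam"
  using Eig_shift perW perV by blast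

lemma T_zero: "(\<And>x. f (x + \<gamma>) = 0) \<Longrightarrow> f = (\<lambda>x. 0)"
  by (metis diff_add_cancel)

lemma span2:
  assumes f: "f \<in> Eig W V lam" and g: "g \<in> Eig W V lam" and p: "\<psi> \<in> Eig W V lam" and d: "det2 f g \<noteq> 0"
  shows "\<exists>a b. \<forall>x. \<psi> x = a * f x + b * g x"
proof -
  define a where "a = (\<psi> 0 * D1 g 0 - g 0 * D1 \<psi> 0) / det2 f g"
  define b where "b = (f 0 * D1 \<psi> 0 - \<psi> 0 * D1 f 0) / det2 f g"
  define r where "r = (\<lambda>x. a * f x + b * g x)"
  have r: "r \<in> Eig W V lam" unfolding r_def by (rule Eig_lin[OF f g])
  have Dr: "D1 r = (\<lambda>x. a * D1 f x + b * D1 g x)" unfolding r_def by (rule Eig_D1_lin[OF f g])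
  define \<rho> where "\<rho> = (\<lambda>x. 1 * \<psi> x + (-1) * r x)"
  have rho: "\<rho> \<in> Eig W V lam" unfolding \<rho>_def by (rule Eig_lin[OF p r])
  have Drho: "D1 \<rho> = (\<lambda>x. 1 * D1 \<psi> x + (-1) * D1 r x)" unfolding \<rho>_def by (rule Eig_D1_lin[OF p r])
  note A = alg2[OF det2_def d, of "\<psi> 0" "D1 \<psi> 0"]
  have "\<rho> 0 = 0" unfolding \<rho>_def r_def a_def b_def using A(1) by simp
  moreover have "D1 \<rho> 0 = 0" unfolding Drho Dr unfolding a_def b_def using A(2) by simp
  ultimately have "\<rho> x = 0" for x by (rule uniq[OF PW PV rho])
  hence "\<psi> x = a * f x + b * g x" for x unfolding \<rho>_def r_def by (simp add: algebra_simps)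
  thus ?thesis by blast
qed

lemma dep2:
  assumes f: "f \<in> Eig W V lam" and g: "g \<in> Eig W V lam" and nz: "f \<noteq> (\<lambda>x. 0)" and d: "det2 f g = 0"
  shows "\<exists>c. \<forall>x. g x = c * f x"
proof -
  have nz0: "\<not> (f 0 = 0 \<and> D1 f 0 = 0)"
  proof
    assume "f 0 = 0 \<and> D1 f 0 = 0"
    hence "f x = 0" for x using uniq[OF PW PV f] by blast
    thus False using nz by auto
  qed
  define c where "c = (if f 0 \<noteq> 0 then g 0 / f 0 else D1 g 0 / D1 f 0)"
  define \<rho> where "\<rho> = (\<lambda>x. 1 * g x + (-c) * f x)"
  have rho: "\<rho> \<in> Eig W V lam" unfolding \<rho>_def by (rule Eig_lin[OF g f])
  have Drho: "D1 \<rho> = (\<lambda>x. 1 * D1 g x + (-c) * D1 f x)" unfolding \<rho>_def by (rule Eig_D1_lin[OF g f])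
  have "\<rho> 0 = 0 \<and> D1 \<rho> 0 = 0"
  proof (cases "f 0 = 0")
    case True
    hence f1: "D1 f 0 \<noteq> 0" using nz0 by simp
    hence "g 0 = 0" using d True unfolding det2_def by simp
    thus ?thesis unfolding Drho unfolding \<rho>_def c_def using True f1 by simp
  next
    case False
    have "D1 g 0 - g 0 / f 0 * D1 f 0 = (f 0 * D1 g 0 - g 0 * D1 f 0) / f 0"
      using False by (simp add: field_simps)
    also have "\<dots> = 0" using d unfolding det2_def by simp
    finally show ?thesis unfolding Drho unfolding \<rho>_def c_def using False by simp
  qed
  hence "\<rho> x = 0" for x using uniq[OF PW PV rho] by blast
  hence "g x = c * f x" for x unfolding \<rho>_def by (simp add: algebra_simps)
  thus ?thesis by blast
qed

lemma det2_scale: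
  assumes f: "f \<in> Eig W V lam"
  shows "det2 f (\<lambda>x. c * f x) = 0"
  using Cp2_scale(2)[OF Eig_Cp2[OF f], of c] unfolding det2_def by simp

end

context floq begin

lemma part1:
  assumes s1: "lam \<in> sigma1 \<gamma> W V" and A: "Aset \<gamma> W V lam = {cls \<gamma> k0}"
  shows "Eig W V lam = {(\<lambda>x. ee k0 x * p x) | p. Cpg 2 \<gamma> p \<and> Dk W V k0 p = (\<lambda>x. complex_of_real lam * p x)}"
proof (intro set_eqI iffI)
  fix \<psi> assume "\<psi> \<in> {(\<lambda>x. ee k0 x * p x) | p. Cpg 2 \<gamma> p \<and> Dk W V k0 p = (\<lambda>x. complex_of_real lam * p x)}"
  then obtain p where p: "Cpg 2 \<gamma> p" "Dk W V k0 p = (\<lambda>x. complex_of_real lam * p x)" "\<psi> = (\<lambda>x. ee k0 x * p x)" by blast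
  thus "\<psi> \<in> Eig W V lam" using Eig_ee[of p k0 W V lam] by (simp add: Cpg_def)
next
  fix \<psi> assume psi: "\<psi> \<in> Eig W V lam"
  have noB: "\<not> (\<exists>\<psi>\<in>Eig W V lam. \<exists>k. formB \<gamma> k \<psi>)" using s1 unfolding sigma1_def by blast
  obtain \<phi> k where phi: "\<phi> \<in> Eig W V lam" "\<phi> \<noteq> (\<lambda>x. 0)" "formA \<gamma> k \<phi>" using s1 unfolding sigma1_def by blast
  then obtain q where q: "Cpg 2 \<gamma> q" "\<phi> = (\<lambda>x. ee k x * q x)" unfolding formA_def ee_fold by blast
  have "cls \<gamma> k \<in> Aset \<gamma> W V lam" by (rule Aset_I[OF phi(1) QM_A[OF phi(2,3)]])
  hence ck: "cls \<gamma> k = cls \<gamma> k0" using A by simp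
  define \<mu> where "\<mu> = ee k0 \<gamma>"
  have mu: "ee k \<gamma> = \<mu>" using ck cls_eq[OF gpos] unfolding \<mu>_def by simp
  have mu0: "\<mu> \<noteq> 0" unfolding \<mu>_def by simp
  have Tphi: "\<phi> (x + \<gamma>) = \<mu> * \<phi> x" for x
    using q unfolding Cpg_def by (simp add: ee_add mu[symmetric])
  have q0: "q \<noteq> (\<lambda>x. 0)" using phi(2) q(2) by auto
  have claim: "\<psi> (x + \<gamma>) = \<mu> * \<psi> x" for x
  proof (cases "det2 \<phi> \<psi> = 0")
    case True
    then obtain c where c: "\<And>x. \<psi> x = c * \<phi> x" using dep2[OF phi(1) psi phi(2)] by blast
    show ?thesis unfolding c Tphi by simp
  next
    case False
    obtain a b where ab: "\<And>x. \<psi> (x + \<gamma>) = a * \<phi> x + b * \<psi> x"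
      using span2[OF phi(1) psi T_in[OF psi] False] by blast
    show ?thesis
    proof (cases "b = \<mu>")
      case bmu: True
      show ?thesis
      proof (cases "a = 0")
        case True thus ?thesis using ab bmu by simp
      next
        case a0: False
        define \<eta> where "\<eta> = (\<lambda>x. (a / (\<mu> * complex_of_real \<gamma>)) * \<phi> x)"
        have Ceta: "Cp 2 \<eta>" unfolding \<eta>_def by (rule Cp2_scale(1)[OF Eig_Cp2[OF phi(1)]])
        have pe: "\<eta> (x + \<gamma>) = ee k \<gamma> * \<eta> x" for x unfolding \<eta>_def Tphi mu by simp
        have pp: "\<psi> (x + \<gamma>) = ee k \<gamma> * (\<psi> x + complex_of_real \<gamma> * \<eta> x)" for x
          unfolding ab bmu mu \<eta>_def using mu0 gpos by (simp add: field_simps)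
        note G = G2[where \<psi>=\<psi> and \<eta>=\<eta> and k=k and \<gamma>=\<gamma>, OF Eig_Cp2[OF psi] Ceta pe pp]
        have P2nz: "(\<lambda>x. ee (- k) x * \<eta> x) \<noteq> (\<lambda>x. 0)"
        proof
          assume "(\<lambda>x. ee (- k) x * \<eta> x) = (\<lambda>x. 0)"
          hence "\<eta> x = 0" for x by (metis ee_nz mult_eq_0_iff)
          hence "\<phi> x = 0" for x unfolding \<eta>_def using a0 mu0 gpos by simp
          thus False using phi(2) by auto
        qed
        have "formB \<gamma> k \<psi>" unfolding formB_def ee_def[symmetric]
          by (rule exI[of _ "\<lambda>x. ee (- k) x * \<psi> x - complex_of_real x * (ee (- k) x * \<eta> x)"],
              rule exI[of _ "\<lambda>x. ee (- k) x * \<eta> x"]) (intro conjI G P2nz)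
        thus ?thesis using noB psi by blast
      qed
    next
      case bmu: False
      define ch where "ch = (\<lambda>x. 1 * \<psi> x + (a / (b - \<mu>)) * \<phi> x)"
      have chi: "ch \<in> Eig W V lam" unfolding ch_def by (rule Eig_lin[OF psi phi(1)])
      have Tchi: "ch (x + \<gamma>) = b * ch x" for x
        unfolding ch_def ab Tphi using bmu by (simp add: field_simps)
      have chi0: "ch \<noteq> (\<lambda>x. 0)"
      proof
        assume "ch = (\<lambda>x. 0)"
        hence "\<psi> = (\<lambda>x. (- (a / (b - \<mu>))) * \<phi> x)" unfolding ch_def by (auto simp: fun_eq_iff eq_neg_iff_add_eq_0)
        hence "det2 \<phi> \<psi> = 0" using det2_scale[OF phi(1), of "- (a / (b - \<mu>))"] by (simp only:)
        thus False using False by simp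
      qed
      have b0: "b \<noteq> 0"
      proof
        assume "b = 0"
        hence "ch = (\<lambda>x. 0)" using Tchi T_zero[of ch] by simp
        thus False using chi0 by simp
      qed
      obtain k' where k': "ee k' \<gamma> = b" using ee_exists[OF gpos b0] by blast
      note G = G1[OF Eig_Cp2[OF chi], where k=k' and \<gamma>=\<gamma>, unfolded k', OF Tchi]
      have p'0: "(\<lambda>x. ee (- k') x * ch x) \<noteq> (\<lambda>x. 0)"
      proof
        assume "(\<lambda>x. ee (- k') x * ch x) = (\<lambda>x. 0)"
        hence "ch x = 0" for x by (metis ee_nz mult_eq_0_iff)
        thus False using chi0 by auto
      qed
      have cne: "cls \<gamma> k \<noteq> cls \<gamma> k'" using cls_eq[OF gpos] mu k' bmu by simp
      have sum: "(\<lambda>x. 1 * \<phi> x + 1 * ch x) \<in> Eig W V lam" by (rule Eig_lin[OF phi(1) chi])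
      have feq: "(\<lambda>x. 1 * \<phi> x + 1 * ch x) = (\<lambda>x. ee k x * q x + ee k' x * (ee (- k') x * ch x))"
        using G(2) q(2) by (simp add: fun_eq_iff)
      have "formC \<gamma> k k' (\<lambda>x. 1 * \<phi> x + 1 * ch x)"
        unfolding formC_def ee_def[symmetric]
        by (rule exI[of _ q], rule exI[of _ "\<lambda>x. ee (- k') x * ch x"]) (intro conjI q(1) G(1) q0 p'0 cne feq)
      hence "cls \<gamma> k' \<in> Aset \<gamma> W V lam" using Aset_I[OF sum] QM_C by blast
      hence "cls \<gamma> k' = cls \<gamma> k" using A ck by simp
      thus ?thesis using cne by simp
    qed
  qed
  note GG = G1[OF Eig_Cp2[OF psi], where k=k0 and \<gamma>=\<gamma>, folded \<mu>_def, OF claim]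
  have DkP: "Dk W V k0 (\<lambda>x. ee (- k0) x * \<psi> x) = (\<lambda>x. complex_of_real lam * (ee (- k0) x * \<psi> x))"
    using Eig_ee[of "\<lambda>x. ee (- k0) x * \<psi> x" k0 W V lam] GG psi by (simp add: Cpg_def)
  show "\<psi> \<in> {(\<lambda>x. ee k0 x * p x) | p. Cpg 2 \<gamma> p \<and> Dk W V k0 p = (\<lambda>x. complex_of_real lam * p x)}"
    by (rule CollectI, rule exI[of _ "\<lambda>x. ee (- k0) x * \<psi> x"]) (intro conjI GG DkP)
qed

end

context floq begin

lemma part2:
  assumes s2: "lam \<in> sigma2 \<gamma> W V" and A: "Aset \<gamma> W V lam = {cls \<gamma> k0}"
  shows "Eig W V lam = {(\<lambda>x. ee k0 x * (p1 x + complex_of_real x * p2 x)) | p1 p2.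
                Cpg 2 \<gamma> p1 \<and> Cpg 2 \<gamma> p2 \<and>
                Dk W V k0 p2 = (\<lambda>x. complex_of_real lam * p2 x) \<and>
                Dk W V k0 p1 = (\<lambda>x. complex_of_real lam * p1 x + (2 * \<i> * k0 - W x) * p2 x + 2 * D1 p2 x)}"
proof (intro set_eqI iffI)
  fix \<psi> assume "\<psi> \<in> {(\<lambda>x. ee k0 x * (p1 x + complex_of_real x * p2 x)) | p1 p2.
                Cpg 2 \<gamma> p1 \<and> Cpg 2 \<gamma> p2 \<and>
                Dk W V k0 p2 = (\<lambda>x. complex_of_real lam * p2 x) \<and>
                Dk W V k0 p1 = (\<lambda>x. complex_of_real lam * p1 x + (2 * \<i> * k0 - W x) * p2 x + 2 * D1 p2 x)}"
  then obtain p1 p2 where p: "Cpg 2 \<gamma> p1" "Cpg 2 \<gamma> p2" "Dk W V k0 p2 = (\<lambda>x. complex_of_real lam * p2 x)"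
    "Dk W V k0 p1 = (\<lambda>x. complex_of_real lam * p1 x + (2 * \<i> * k0 - W x) * p2 x + 2 * D1 p2 x)"
    "\<psi> = (\<lambda>x. ee k0 x * (p1 x + complex_of_real x * p2 x))" by blast
  have C: "Cp 2 p1" "Cp 2 p2" using p by (auto simp: Cpg_def)
  note X = Dk_x(1)[OF C] Dk_x(2)[OF C, of W V k0]
  have "Dk W V k0 (\<lambda>x. p1 x + complex_of_real x * p2 x) = (\<lambda>x. complex_of_real lam * (p1 x + complex_of_real x * p2 x))"
    unfolding X(2) p(3) p(4) by (simp add: fun_eq_iff algebra_simps)
  thus "\<psi> \<in> Eig W V lam" unfolding p(5) using Eig_ee[OF X(1), of k0 W V lam] by simp
next
  fix \<psi> assume psi: "\<psi> \<in> Eig W V lam"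
  obtain \<phi> k where phi: "\<phi> \<in> Eig W V lam" "formB \<gamma> k \<phi>" using s2 unfolding sigma2_def by blast
  then obtain p1 p2 where q: "Cpg 2 \<gamma> p1" "Cpg 2 \<gamma> p2" "p2 \<noteq> (\<lambda>x. 0)"
    "\<phi> = (\<lambda>x. ee k x * (p1 x + complex_of_real x * p2 x))" unfolding formB_def ee_def[symmetric] by blast
  have "cls \<gamma> k \<in> Aset \<gamma> W V lam" by (rule Aset_I[OF phi(1) QM_B[OF phi(2)]])
  hence ck: "cls \<gamma> k = cls \<gamma> k0" using A by simp
  define \<mu> where "\<mu> = ee k0 \<gamma>"
  have mu: "ee k \<gamma> = \<mu>" using ck cls_eq[OF gpos] unfolding \<mu>_def by simp
  have mu0: "\<mu> \<noteq> 0" unfolding \<mu>_def by simp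
  define \<phi>1 where "\<phi>1 = (\<lambda>x. ee k x * p2 x)"
  have T1: "\<phi>1 (x + \<gamma>) = \<mu> * \<phi>1 x" for x
    using q(2) unfolding Cpg_def \<phi>1_def by (simp add: ee_add mu[symmetric])
  have T: "\<phi> (x + \<gamma>) = \<mu> * (\<phi> x + complex_of_real \<gamma> * \<phi>1 x)" for x
  proof -
    have per: "p1 (x+\<gamma>) = p1 x" "p2 (x+\<gamma>) = p2 x" using q(1,2) unfolding Cpg_def by auto
    have "\<phi> (x+\<gamma>) = ee k x * ee k \<gamma> * (p1 x + complex_of_real (x+\<gamma>) * p2 x)"
      unfolding q(4) by (simp only: ee_add per)
    thus ?thesis unfolding q(4) \<phi>1_def mu[symmetric] by (simp add: algebra_simps)
  qed
  have "(\<lambda>x. (1 / (\<mu> * complex_of_real \<gamma>)) * \<phi> (x + \<gamma>) + (- 1 / complex_of_real \<gamma>) * \<phi> x) \<in> Eig W V lam"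
    by (rule Eig_lin[OF T_in[OF phi(1)] phi(1)])
  moreover have "(\<lambda>x. (1 / (\<mu> * complex_of_real \<gamma>)) * \<phi> (x + \<gamma>) + (- 1 / complex_of_real \<gamma>) * \<phi> x) = \<phi>1"
    unfolding T using mu0 gpos by (simp add: fun_eq_iff field_simps)
  ultimately have phi1: "\<phi>1 \<in> Eig W V lam" by simp
  have phi10: "\<phi>1 \<noteq> (\<lambda>x. 0)"
  proof
    assume "\<phi>1 = (\<lambda>x. 0)"
    hence "p2 x = 0" for x unfolding \<phi>1_def by (metis ee_nz mult_eq_0_iff)
    thus False using q(3) by auto
  qed
  have d: "det2 \<phi>1 \<phi> \<noteq> 0"
  proof
    assume "det2 \<phi>1 \<phi> = 0"
    then obtain c where c: "\<And>x. \<phi> x = c * \<phi>1 x" using dep2[OF phi1 phi(1) phi10] by blast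
    have "\<mu> * complex_of_real \<gamma> * \<phi>1 x = 0" for x
    proof -
      have "\<phi> (x + \<gamma>) = c * \<mu> * \<phi>1 x" unfolding c T1 by simp
      moreover have "\<phi> (x + \<gamma>) = \<mu> * (c * \<phi>1 x) + \<mu> * complex_of_real \<gamma> * \<phi>1 x" using T[of x] unfolding c[of x] by (simp add: algebra_simps)
      ultimately show ?thesis by (simp add: algebra_simps)
    qed
    hence "\<phi>1 x = 0" for x using mu0 gpos by simp
    thus False using phi10 by auto
  qed
  obtain a b where ab: "\<And>x. \<psi> x = a * \<phi>1 x + b * \<phi> x" using span2[OF phi1 phi(1) psi d] by blast
  define \<eta> where "\<eta> = (\<lambda>x. b * \<phi>1 x)"
  have eta: "\<eta> \<in> Eig W V lam" using Eig_lin[OF phi1 phi1, of b 0] unfolding \<eta>_def by simp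
  have pe: "\<eta> (x + \<gamma>) = ee k0 \<gamma> * \<eta> x" for x unfolding \<eta>_def T1 \<mu>_def[symmetric] by simp
  have pp: "\<psi> (x + \<gamma>) = ee k0 \<gamma> * (\<psi> x + complex_of_real \<gamma> * \<eta> x)" for x
    unfolding ab T T1 \<eta>_def \<mu>_def[symmetric] by (simp add: algebra_simps)
  define P2 where "P2 = (\<lambda>x. ee (-k0) x * \<eta> x)"
  define P1 where "P1 = (\<lambda>x. ee (-k0) x * \<psi> x - complex_of_real x * P2 x)"
  note G0 = G2[where \<psi>=\<psi> and \<eta>=\<eta> and k=k0 and \<gamma>=\<gamma>, OF Eig_Cp2[OF psi] Eig_Cp2[OF eta] pe pp]
  have G: "Cpg 2 \<gamma> P1" "Cpg 2 \<gamma> P2" "\<psi> = (\<lambda>x. ee k0 x * (P1 x + complex_of_real x * P2 x))"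
    using G0 unfolding P1_def P2_def by blast+
  have C: "Cp 2 P1" "Cp 2 P2" using G by (auto simp: Cpg_def)
  have etaeq: "\<eta> = (\<lambda>x. ee k0 x * P2 x)" unfolding P2_def using ee_neg
    by (simp add: fun_eq_iff mult.assoc[symmetric] mult.commute[of "ee k0 _"])
  have D2: "Dk W V k0 P2 = (\<lambda>x. complex_of_real lam * P2 x)" using Eig_ee[OF C(2), of k0 W V lam] eta etaeq by simp
  note X = Dk_x(1)[OF C] Dk_x(2)[OF C, of W V k0]
  have "Dk W V k0 (\<lambda>x. P1 x + complex_of_real x * P2 x) = (\<lambda>x. complex_of_real lam * (P1 x + complex_of_real x * P2 x))"
    using Eig_ee[OF X(1), of k0 W V lam] psi G(3) by simp
  hence "Dk W V k0 P1 x + complex_of_real x * Dk W V k0 P2 x - 2 * D1 P2 x + (W x - 2 * \<i> * k0) * P2 x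
        = complex_of_real lam * (P1 x + complex_of_real x * P2 x)" for x
    unfolding X(2) by (metis)
  hence D1: "Dk W V k0 P1 = (\<lambda>x. complex_of_real lam * P1 x + (2 * \<i> * k0 - W x) * P2 x + 2 * D1 P2 x)"
    unfolding D2 by (simp add: fun_eq_iff algebra_simps)
  show "\<psi> \<in> {(\<lambda>x. ee k0 x * (p1 x + complex_of_real x * p2 x)) | p1 p2.
                Cpg 2 \<gamma> p1 \<and> Cpg 2 \<gamma> p2 \<and>
                Dk W V k0 p2 = (\<lambda>x. complex_of_real lam * p2 x) \<and>
                Dk W V k0 p1 = (\<lambda>x. complex_of_real lam * p1 x + (2 * \<i> * k0 - W x) * p2 x + 2 * D1 p2 x)}"
    by (rule CollectI, rule exI[of _ P1], rule exI[of _ P2]) (intro conjI G D1 D2)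
qed

end

lemma alg3:
  fixes m1 m2 a b :: complex assumes "m1 \<noteq> m2"
  shows "(1/(m1-m2))*(m1*a + m2*b) + (-m2/(m1-m2))*(a+b) = a"
proof -
  have ne: "m1 - m2 \<noteq> 0" using assms by simp
  have "(1/(m1-m2))*(m1*a + m2*b) + (-m2/(m1-m2))*(a+b) = ((m1*a + m2*b) - m2*(a+b))/(m1-m2)"
    by (simp add: divide_simps ne)
  also have "\<dots> = ((m1 - m2) * a)/(m1-m2)" by (simp add: algebra_simps)
  finally show ?thesis using ne by simp
qed

context floq begin

lemma part3:
  assumes s3: "lam \<in> sigma3 \<gamma> W V"
  shows "Eig W V lam = cspan {(\<lambda>x. ee k x * p x) | k p.
                Dk W V k p = (\<lambda>x. complex_of_real lam * p x) \<and> cls \<gamma> k \<in> Aset \<gamma> W V lam \<and>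
                card (Aset \<gamma> W V lam) = 2 \<and> Cpg 2 \<gamma> p}" (is "_ = cspan ?S")
proof -
  interpret M: module "\<lambda>(c::complex) (f::real \<Rightarrow> complex) x. c * f x" by (rule fmodule)
  have card: "card (Aset \<gamma> W V lam) = 2" using s3 unfolding sigma3_def by blast
  obtain \<phi> k1 k2 where phi: "\<phi> \<in> Eig W V lam" "formC \<gamma> k1 k2 \<phi>" using s3 unfolding sigma3_def by blast
  then obtain p1 p2 where q: "Cpg 2 \<gamma> p1" "Cpg 2 \<gamma> p2" "p1 \<noteq> (\<lambda>x. 0)" "p2 \<noteq> (\<lambda>x. 0)"
    "cls \<gamma> k1 \<noteq> cls \<gamma> k2" "\<phi> = (\<lambda>x. ee k1 x * p1 x + ee k2 x * p2 x)"
    unfolding formC_def ee_def[symmetric] by blast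
  have A1: "cls \<gamma> k1 \<in> Aset \<gamma> W V lam" "cls \<gamma> k2 \<in> Aset \<gamma> W V lam"
    using Aset_I[OF phi(1)] QM_C[OF phi(2)] by auto
  define \<mu>1 where "\<mu>1 = ee k1 \<gamma>"
  define \<mu>2 where "\<mu>2 = ee k2 \<gamma>"
  have mune: "\<mu>1 \<noteq> \<mu>2" using q(5) cls_eq[OF gpos] unfolding \<mu>1_def \<mu>2_def by simp
  define c1 where "c1 = (\<lambda>x. ee k1 x * p1 x)"
  define c2 where "c2 = (\<lambda>x. ee k2 x * p2 x)"
  have T1: "c1 (x + \<gamma>) = \<mu>1 * c1 x" for x using q(1) unfolding c1_def \<mu>1_def Cpg_def by (simp add: ee_add)
  have T2: "c2 (x + \<gamma>) = \<mu>2 * c2 x" for x using q(2) unfolding c2_def \<mu>2_def Cpg_def by (simp add: ee_add)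
  have phieq: "\<phi> x = c1 x + c2 x" for x unfolding q(6) c1_def c2_def by simp
  have Tphi: "\<phi> (x + \<gamma>) = \<mu>1 * c1 x + \<mu>2 * c2 x" for x unfolding phieq T1 T2 ..
  have "(\<lambda>x. (1 / (\<mu>1 - \<mu>2)) * \<phi> (x + \<gamma>) + (- \<mu>2 / (\<mu>1 - \<mu>2)) * \<phi> x) \<in> Eig W V lam"
    by (rule Eig_lin[OF T_in[OF phi(1)] phi(1)])
  moreover have "(\<lambda>x. (1 / (\<mu>1 - \<mu>2)) * \<phi> (x + \<gamma>) + (- \<mu>2 / (\<mu>1 - \<mu>2)) * \<phi> x) = c1"
    unfolding Tphi unfolding phieq using alg3[OF mune] by (simp add: fun_eq_iff)
  ultimately have c1E: "c1 \<in> Eig W V lam" by simp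
  have "(\<lambda>x. (1 / (\<mu>2 - \<mu>1)) * \<phi> (x + \<gamma>) + (- \<mu>1 / (\<mu>2 - \<mu>1)) * \<phi> x) \<in> Eig W V lam"
    by (rule Eig_lin[OF T_in[OF phi(1)] phi(1)])
  moreover have "(\<lambda>x. (1 / (\<mu>2 - \<mu>1)) * \<phi> (x + \<gamma>) + (- \<mu>1 / (\<mu>2 - \<mu>1)) * \<phi> x) = c2"
  proof (rule ext)
    fix x
    have e: "\<mu>1 * c1 x + \<mu>2 * c2 x = \<mu>2 * c2 x + \<mu>1 * c1 x" "c1 x + c2 x = c2 x + c1 x" by simp_all
    show "(1 / (\<mu>2 - \<mu>1)) * \<phi> (x + \<gamma>) + (- \<mu>1 / (\<mu>2 - \<mu>1)) * \<phi> x = c2 x"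
      unfolding Tphi unfolding phieq e by (rule alg3) (use mune in auto)
  qed
  ultimately have c2E: "c2 \<in> Eig W V lam" by simp
  have c10: "c1 \<noteq> (\<lambda>x. 0)"
  proof
    assume "c1 = (\<lambda>x. 0)"
    hence "p1 x = 0" for x unfolding c1_def by (metis ee_nz mult_eq_0_iff)
    thus False using q(3) by auto
  qed
  have c20: "c2 \<noteq> (\<lambda>x. 0)"
  proof
    assume "c2 = (\<lambda>x. 0)"
    hence "p2 x = 0" for x unfolding c2_def by (metis ee_nz mult_eq_0_iff)
    thus False using q(4) by auto
  qed
  have d: "det2 c1 c2 \<noteq> 0"
  proof
    assume "det2 c1 c2 = 0"
    then obtain c where c: "\<And>x. c2 x = c * c1 x" using dep2[OF c1E c2E c10] by blast
    have "(\<mu>2 - \<mu>1) * c2 x = 0" for x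
    proof -
      have "c2 (x + \<gamma>) = \<mu>2 * c2 x" by (rule T2)
      moreover have "c2 (x + \<gamma>) = \<mu>1 * c2 x" unfolding c T1 by simp
      ultimately show ?thesis by (simp add: algebra_simps)
    qed
    hence "c2 x = 0" for x using mune by simp
    thus False using c20 by auto
  qed
  have S1: "c1 \<in> ?S"
  proof -
    have C: "Cp 2 p1" using q(1) by (simp add: Cpg_def)
    have "Dk W V k1 p1 = (\<lambda>x. complex_of_real lam * p1 x)" using Eig_ee[OF C, of k1 W V lam] c1E unfolding c1_def by simp
    thus ?thesis unfolding c1_def using A1 card q(1) by blast
  qed
  have S2: "c2 \<in> ?S"
  proof -
    have C: "Cp 2 p2" using q(2) by (simp add: Cpg_def)
    have "Dk W V k2 p2 = (\<lambda>x. complex_of_real lam * p2 x)" using Eig_ee[OF C, of k2 W V lam] c2E unfolding c2_def by simp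
    thus ?thesis unfolding c2_def using A1 card q(2) by blast
  qed
  have SE: "?S \<subseteq> Eig W V lam"
  proof
    fix f assume "f \<in> ?S"
    then obtain k p where kp: "f = (\<lambda>x. ee k x * p x)" "Dk W V k p = (\<lambda>x. complex_of_real lam * p x)" "Cpg 2 \<gamma> p" by blast
    thus "f \<in> Eig W V lam" using Eig_ee[of p k W V lam] by (simp add: Cpg_def)
  qed
  have sub: "M.subspace (Eig W V lam)"
  proof (rule M.subspaceI)
    show "0 \<in> Eig W V lam" using Eig_lin[OF phi(1) phi(1), of 0 0] by (simp add: zero_fun_def)
  next
    fix f g assume "f \<in> Eig W V lam" "g \<in> Eig W V lam"
    thus "f + g \<in> Eig W V lam" using Eig_lin[of f W V lam g 1 1] by (simp add: plus_fun_def)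
  next
    fix c f assume "f \<in> Eig W V lam"
    thus "(\<lambda>x. c * f x) \<in> Eig W V lam" using Eig_lin[of f W V lam f c 0] by simp
  qed
  show ?thesis
  proof (intro set_eqI iffI)
    fix \<psi> assume psi: "\<psi> \<in> Eig W V lam"
    obtain a b where ab: "\<And>x. \<psi> x = a * c1 x + b * c2 x" using span2[OF c1E c2E psi d] by blast
    have "\<psi> = (\<lambda>x. a * c1 x) + (\<lambda>x. b * c2 x)" using ab by (simp add: fun_eq_iff)
    moreover have "(\<lambda>x. a * c1 x) + (\<lambda>x. b * c2 x) \<in> M.span ?S"
      by (intro M.span_add M.span_scale M.span_base S1 S2)
    ultimately show "\<psi> \<in> cspan ?S" unfolding cspan_def by simp
  next
    fix \<psi> assume "\<psi> \<in> cspan ?S"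
    thus "\<psi> \<in> Eig W V lam" using M.span_minimal[OF SE sub] unfolding cspan_def by blast
  qed
qed

end

theorem theorem3p5:
  fixes \<gamma> :: real and W V :: "real \<Rightarrow> complex"
  assumes "\<gamma> > 0" and "Cpg 0 \<gamma> W" and "Cpg 0 \<gamma> V"
  shows "(\<forall>lam k0. lam \<in> sigma1 \<gamma> W V \<and> Aset \<gamma> W V lam = {cls \<gamma> k0} \<longrightarrow>
            Eig W V lam = {(\<lambda>x. exp (\<i> * k0 * complex_of_real x) * p x) | p.
                Cpg 2 \<gamma> p \<and> Dk W V k0 p = (\<lambda>x. complex_of_real lam * p x)})
       \<and> (\<forall>lam k0. lam \<in> sigma2 \<gamma> W V \<and> Aset \<gamma> W V lam = {cls \<gamma> k0} \<longrightarrow>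
            Eig W V lam = {(\<lambda>x. exp (\<i> * k0 * complex_of_real x) * (p1 x + complex_of_real x * p2 x)) | p1 p2.
                Cpg 2 \<gamma> p1 \<and> Cpg 2 \<gamma> p2 \<and>
                Dk W V k0 p2 = (\<lambda>x. complex_of_real lam * p2 x) \<and>
                Dk W V k0 p1 = (\<lambda>x. complex_of_real lam * p1 x + (2 * \<i> * k0 - W x) * p2 x + 2 * D1 p2 x)})
       \<and> (\<forall>lam. lam \<in> sigma3 \<gamma> W V \<longrightarrow>
            Eig W V lam = cspan {(\<lambda>x. exp (\<i> * k * complex_of_real x) * p x) | k p.
                Dk W V k p = (\<lambda>x. complex_of_real lam * p x) \<and> cls \<gamma> k \<in> Aset \<gamma> W V lam \<and>
                card (Aset \<gamma> W V lam) = 2 \<and> Cpg 2 \<gamma> p})"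
proof -
  have PW: "PC W" "PC V" using assms(2,3) by (simp_all add: Cpg_def)
  have per: "\<And>x. W (x + \<gamma>) = W x" "\<And>x. V (x + \<gamma>) = V x" using assms(2,3) by (simp_all add: Cpg_def)
  have L: "floq \<gamma> W V" by unfold_locales (use assms PW per in auto)
  show ?thesis
  proof (intro conjI allI impI)
    fix lam k0 assume h: "lam \<in> sigma1 \<gamma> W V \<and> Aset \<gamma> W V lam = {cls \<gamma> k0}"
    show "Eig W V lam = {(\<lambda>x. exp (\<i> * k0 * complex_of_real x) * p x) | p.
                Cpg 2 \<gamma> p \<and> Dk W V k0 p = (\<lambda>x. complex_of_real lam * p x)}"
      by (rule floq.part1[OF L, unfolded ee_def]) (use h in auto)
  next
    fix lam k0 assume h: "lam \<in> sigma2 \<gamma> W V \<and> Aset \<gamma> W V lam = {cls \<gamma> k0}"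
    show "Eig W V lam = {(\<lambda>x. exp (\<i> * k0 * complex_of_real x) * (p1 x + complex_of_real x * p2 x)) | p1 p2.
                Cpg 2 \<gamma> p1 \<and> Cpg 2 \<gamma> p2 \<and>
                Dk W V k0 p2 = (\<lambda>x. complex_of_real lam * p2 x) \<and>
                Dk W V k0 p1 = (\<lambda>x. complex_of_real lam * p1 x + (2 * \<i> * k0 - W x) * p2 x + 2 * D1 p2 x)}"
      by (rule floq.part2[OF L, unfolded ee_def]) (use h in auto)
  next
    fix lam assume h: "lam \<in> sigma3 \<gamma> W V"
    show "Eig W V lam = cspan {(\<lambda>x. exp (\<i> * k * complex_of_real x) * p x) | k p.
                Dk W V k p = (\<lambda>x. complex_of_real lam * p x) \<and> cls \<gamma> k \<in> Aset \<gamma> W V lam \<and>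
                card (Aset \<gamma> W V lam) = 2 \<and> Cpg 2 \<gamma> p}"
      by (rule floq.part3[OF L, unfolded ee_def]) (use h in auto)
  qed
qed

end
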